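(* Let $\mathcal A=\{a_\alpha:\alpha<\omega_1\}$ (enumerated without repetition) be a near-Luzin almost disjoint family of subsets of a countable set, let $n,k\in\omega$, and let $E$ be an uncountable family of pairwise disjoint $n$-element subsets of $\omega_1$. Then there are $s\neq t$ in $E$ such that $a_\alpha\cap a_\beta\not\subseteq k=\{0,\dots,k-1\}$ for all $\alpha\in s$ and $\beta\in t$.
   Context: An almost disjoint family is a collection of infinite sets whose pairwise intersections are finite. An uncountable almost disjoint family $\mathcal A$ is near-Luzin iff for all uncountable $\mathcal C,\mathcal D\subseteq\mathcal A$ the set $\bigcup\mathcal C\cap\bigcup\mathcal D$ is infinite. The natural number $k$ is identified with $\{0,\dots,k-1\}$ (the underlying countable set is taken to be $\omega$). *)

theory Defs
  imports Main "HOL-Library.Countable_Set"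
begin

definition almost_disjoint :: "nat set set \<Rightarrow> bool" where
  "almost_disjoint \<A> \<longleftrightarrow>
     (\<forall>a\<in>\<A>. infinite a) \<and> (\<forall>a\<in>\<A>. \<forall>b\<in>\<A>. a \<noteq> b \<longrightarrow> finite (a \<inter> b))"

definition near_luzin :: "nat set set \<Rightarrow> bool" where
  "near_luzin \<A> \<longleftrightarrow> almost_disjoint \<A> \<and> uncountable \<A> \<and>
     (\<forall>\<C> \<D>. \<C> \<subseteq> \<A> \<longrightarrow> \<D> \<subseteq> \<A> \<longrightarrow> uncountable \<C> \<longrightarrow> uncountable \<D> \<longrightarrow>
        infinite (\<Union>\<C> \<inter> \<Union>\<D>))"

definition is_omega1 :: "'i::wellorder itself \<Rightarrow> bool" where
  "is_omega1 _ \<longleftrightarrow> uncountable (UNIV :: 'i set) \<and> (\<forall>x::'i. countable {..<x})"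

end

theory Submission
  imports Defs
begin

lemma keyP:
  fixes a :: "'i \<Rightarrow> nat set"
  assumes inj: "inj a" and nl: "near_luzin (range a)"
    and C: "uncountable C" and D: "uncountable D"
  shows "\<exists>m\<ge>k. uncountable {\<alpha>\<in>C. m \<in> a \<alpha>} \<and> uncountable {\<beta>\<in>D. m \<in> a \<beta>}"
proof (rule ccontr)
  assume H: "\<not> ?thesis"
  define MC where "MC = {m. countable {\<alpha>\<in>C. m \<in> a \<alpha>}}"
  define MD where "MD = {m. countable {\<beta>\<in>D. m \<in> a \<beta>}}"
  have cov: "\<forall>m\<ge>k. m \<in> MC \<or> m \<in> MD" using H unfolding MC_def MD_def by auto
  define XC where "XC = (\<Union>m\<in>MC. {\<alpha>\<in>C. m \<in> a \<alpha>})"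
  define XD where "XD = (\<Union>m\<in>MD. {\<alpha>\<in>D. m \<in> a \<alpha>})"
  have cXC: "countable XC" unfolding XC_def
    by (rule countable_UN) (auto simp: MC_def)
  have cXD: "countable XD" unfolding XD_def
    by (rule countable_UN) (auto simp: MD_def)
  have uC: "uncountable (C - XC)"
  proof
    assume "countable (C - XC)"
    then have "countable ((C - XC) \<union> XC)" using cXC countable_Un by blast
    moreover have "C \<subseteq> (C - XC) \<union> XC" by blast
    ultimately show False using C countable_subset by blast
  qed
  have uD: "uncountable (D - XD)"
  proof
    assume "countable (D - XD)"
    then have "countable ((D - XD) \<union> XD)" using cXD countable_Un by blast
    moreover have "D \<subseteq> (D - XD) \<union> XD" by blast
    ultimately show False using D countable_subset by blast
  qed
  have uaC: "uncountable (a ` (C - XC))"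
    using uC countable_image_inj_on[of a "C - XC"] inj_on_subset[OF inj, of "C - XC"] by blast
  have uaD: "uncountable (a ` (D - XD))"
    using uD countable_image_inj_on[of a "D - XD"] inj_on_subset[OF inj, of "D - XD"] by blast
  have "infinite (\<Union>(a ` (C - XC)) \<inter> \<Union>(a ` (D - XD)))"
  proof -
    have "\<forall>\<C> \<D>. \<C> \<subseteq> range a \<longrightarrow> \<D> \<subseteq> range a \<longrightarrow> uncountable \<C> \<longrightarrow> uncountable \<D> \<longrightarrow>
        infinite (\<Union>\<C> \<inter> \<Union>\<D>)" using nl unfolding near_luzin_def by (rule conjunct2[OF conjunct2])
    then show ?thesis using uaC uaD by (meson image_mono subset_UNIV)
  qed
  then obtain x where x: "x \<ge> k" "x \<in> \<Union>(a ` (C - XC)) \<inter> \<Union>(a ` (D - XD))"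
    unfolding infinite_nat_iff_unbounded_le by (meson dual_order.refl)
  then obtain \<alpha> \<beta> where ab: "\<alpha> \<in> C - XC" "x \<in> a \<alpha>" "\<beta> \<in> D - XD" "x \<in> a \<beta>" by blast
  from cov x(1) have "x \<in> MC \<or> x \<in> MD" by blast
  then show False
  proof
    assume "x \<in> MC" then have "\<alpha> \<in> XC" using ab unfolding XC_def by blast
    then show False using ab by blast
  next
    assume "x \<in> MD" then have "\<beta> \<in> XD" using ab unfolding XD_def by blast
    then show False using ab by blast
  qed
qed

lemma nth_in:
  fixes s :: "'i::wellorder set"
  assumes "finite s" "card s = n" "i < n"
  shows "sorted_list_of_set s ! i \<in> s"
proof -
  have "i < length (sorted_list_of_set s)" using assms by simp
  then have "sorted_list_of_set s ! i \<in> set (sorted_list_of_set s)" by (rule nth_mem)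
  then show ?thesis using assms(1) by simp
qed

lemma inj_sel:
  fixes E :: "'i::wellorder set set"
  assumes fin: "\<forall>s\<in>E. finite s \<and> card s = n"
    and disj: "\<forall>s\<in>E. \<forall>t\<in>E. s \<noteq> t \<longrightarrow> s \<inter> t = {}"
    and "E1 \<subseteq> E" "i < n"
  shows "inj_on (\<lambda>s. sorted_list_of_set s ! i) E1"
proof (rule inj_onI)
  fix s t assume st: "s \<in> E1" "t \<in> E1" "sorted_list_of_set s ! i = sorted_list_of_set t ! i"
  have sE: "s \<in> E" "t \<in> E" using st assms(3) by auto
  have "sorted_list_of_set s ! i \<in> s" using nth_in[of s n i] fin sE assms(4) by auto
  moreover have "sorted_list_of_set t ! i \<in> t" using nth_in[of t n i] fin sE assms(4) by auto
  ultimately have "s \<inter> t \<noteq> {}" using st(3) by auto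
  then show "s = t" using disj sE by blast
qed

lemma uncount_sel:
  fixes E :: "'i::wellorder set set"
  assumes fin: "\<forall>s\<in>E. finite s \<and> card s = n"
    and disj: "\<forall>s\<in>E. \<forall>t\<in>E. s \<noteq> t \<longrightarrow> s \<inter> t = {}"
    and "E1 \<subseteq> E" "i < n" "uncountable E1"
  shows "uncountable ((\<lambda>s. sorted_list_of_set s ! i) ` E1)"
  using inj_sel[OF fin disj assms(3,4)] assms(5) countable_image_inj_on by metis

lemma stepL:
  fixes a :: "'i::wellorder \<Rightarrow> nat set"
    and E :: "'i set set"
  assumes inj: "inj a" and nl: "near_luzin (range a)"
    and uE: "uncountable E"
    and fin: "\<forall>s\<in>E. finite s \<and> card s = n"
    and disj: "\<forall>s\<in>E. \<forall>t\<in>E. s \<noteq> t \<longrightarrow> s \<inter> t = {}"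
  shows "finite P \<Longrightarrow> (\<forall>(i,j)\<in>P. i < n \<and> j < n) \<Longrightarrow>
    \<exists>E1 E2. E1 \<subseteq> E \<and> E2 \<subseteq> E \<and> uncountable E1 \<and> uncountable E2 \<and>
      (\<forall>s\<in>E1. \<forall>t\<in>E2. \<forall>(i,j)\<in>P.
         \<not> (a (sorted_list_of_set s ! i) \<inter> a (sorted_list_of_set t ! j) \<subseteq> {..<k}))"
proof (induction P rule: finite_induct)
  case empty
  then show ?case using uE by blast
next
  case (insert p P)
  obtain i j where p: "p = (i, j)" by (cases p)
  have ij: "i < n" "j < n" using insert.prems p by auto
  obtain E1 E2 where E: "E1 \<subseteq> E" "E2 \<subseteq> E" "uncountable E1" "uncountable E2"
    and good: "\<forall>s\<in>E1. \<forall>t\<in>E2. \<forall>(i,j)\<in>P.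
         \<not> (a (sorted_list_of_set s ! i) \<inter> a (sorted_list_of_set t ! j) \<subseteq> {..<k})"
    using insert by auto
  define f where "f = (\<lambda>s::'i set. sorted_list_of_set s ! i)"
  define g where "g = (\<lambda>s::'i set. sorted_list_of_set s ! j)"
  have uC: "uncountable (f ` E1)" unfolding f_def using uncount_sel[OF fin disj E(1) ij(1) E(3)] .
  have uD: "uncountable (g ` E2)" unfolding g_def using uncount_sel[OF fin disj E(2) ij(2) E(4)] .
  obtain m where m: "m \<ge> k" "uncountable {\<alpha>\<in>f ` E1. m \<in> a \<alpha>}"
    "uncountable {\<beta>\<in>g ` E2. m \<in> a \<beta>}"
    using keyP[OF inj nl uC uD, of k] by blast
  define E1' where "E1' = {s\<in>E1. m \<in> a (f s)}"
  define E2' where "E2' = {s\<in>E2. m \<in> a (g s)}"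
  have "f ` E1' = {\<alpha>\<in>f ` E1. m \<in> a \<alpha>}" unfolding E1'_def by auto
  then have u1: "uncountable E1'" using m(2) countable_image by metis
  have "g ` E2' = {\<alpha>\<in>g ` E2. m \<in> a \<alpha>}" unfolding E2'_def by auto
  then have u2: "uncountable E2'" using m(3) countable_image by metis
  have "\<forall>s\<in>E1'. \<forall>t\<in>E2'. \<forall>(i,j)\<in>insert p P.
         \<not> (a (sorted_list_of_set s ! i) \<inter> a (sorted_list_of_set t ! j) \<subseteq> {..<k})"
  proof (intro ballI)
    fix s t q assume st: "s \<in> E1'" "t \<in> E2'" "q \<in> insert p P"
    show "case q of (i,j) \<Rightarrow>
         \<not> (a (sorted_list_of_set s ! i) \<inter> a (sorted_list_of_set t ! j) \<subseteq> {..<k})"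
    proof (cases "q = p")
      case True
      have "m \<in> a (f s)" "m \<in> a (g t)" using st unfolding E1'_def E2'_def by auto
      then show ?thesis using True p m(1) unfolding f_def g_def by auto
    next
      case False
      then have "q \<in> P" using st by blast
      moreover have "s \<in> E1" "t \<in> E2" using st unfolding E1'_def E2'_def by auto
      ultimately show ?thesis using good by blast
    qed
  qed
  moreover have "E1' \<subseteq> E" "E2' \<subseteq> E" using E unfolding E1'_def E2'_def by auto
  ultimately show ?case using u1 u2 by blast
qed

theorem lemma1p3:
  fixes a :: "'i::wellorder \<Rightarrow> nat set"
    and E :: "'i set set"
    and n k :: nat
  assumes "is_omega1 TYPE('i)"
    and "inj a"
    and "near_luzin (range a)"
    and "uncountable E"
    and "\<forall>s\<in>E. finite s \<and> card s = n"
    and "\<forall>s\<in>E. \<forall>t\<in>E. s \<noteq> t \<longrightarrow> s \<inter> t = {}"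
  shows "\<exists>s\<in>E. \<exists>t\<in>E. s \<noteq> t \<and>
           (\<forall>\<alpha>\<in>s. \<forall>\<beta>\<in>t. \<not> (a \<alpha> \<inter> a \<beta> \<subseteq> {..<k}))"
proof -
  obtain E1 E2 where E: "E1 \<subseteq> E" "E2 \<subseteq> E" "uncountable E1" "uncountable E2"
    and good: "\<forall>s\<in>E1. \<forall>t\<in>E2. \<forall>(i,j)\<in>{..<n}\<times>{..<n}.
         \<not> (a (sorted_list_of_set s ! i) \<inter> a (sorted_list_of_set t ! j) \<subseteq> {..<k})"
  proof -
    have fP: "finite ({..<n}\<times>{..<n})" by simp
    have bP: "\<forall>(i,j)\<in>{..<n}\<times>{..<n}. i < n \<and> j < n" by auto
    have "\<exists>E1 E2. E1 \<subseteq> E \<and> E2 \<subseteq> E \<and> uncountable E1 \<and> uncountable E2 \<and>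
      (\<forall>s\<in>E1. \<forall>t\<in>E2. \<forall>(i,j)\<in>{..<n}\<times>{..<n}.
         \<not> (a (sorted_list_of_set s ! i) \<inter> a (sorted_list_of_set t ! j) \<subseteq> {..<k}))"
      by (rule stepL[OF assms(2-6) fP bP])
    then show ?thesis by (elim exE conjE) (rule that)
  qed
  have "E1 \<noteq> {}" using E(3) by auto
  then obtain s where s: "s \<in> E1" by blast
  have "infinite E2" using E(4) countable_finite by blast
  then have "infinite (E2 - {s})" by simp
  then have "E2 - {s} \<noteq> {}" by (metis finite.emptyI)
  then obtain t where t: "t \<in> E2" "t \<noteq> s" by blast
  have sE: "s \<in> E" "t \<in> E" using E(1,2) s t(1) by auto
  have fs: "finite s" "card s = n" "finite t" "card t = n" using assms(5) sE by auto
  have "\<forall>\<alpha>\<in>s. \<forall>\<beta>\<in>t. \<not> (a \<alpha> \<inter> a \<beta> \<subseteq> {..<k})"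
  proof (intro ballI)
    fix \<alpha> \<beta> assume ab: "\<alpha> \<in> s" "\<beta> \<in> t"
    obtain i where i: "i < n" "\<alpha> = sorted_list_of_set s ! i"
    proof -
      have "\<alpha> \<in> set (sorted_list_of_set s)" using ab fs by simp
      then obtain i0 where "i0 < length (sorted_list_of_set s)" "sorted_list_of_set s ! i0 = \<alpha>"
        by (auto simp: in_set_conv_nth)
      then show ?thesis using that fs by simp
    qed
    obtain j where j: "j < n" "\<beta> = sorted_list_of_set t ! j"
    proof -
      have "\<beta> \<in> set (sorted_list_of_set t)" using ab fs by simp
      then obtain i0 where "i0 < length (sorted_list_of_set t)" "sorted_list_of_set t ! i0 = \<beta>"
        by (auto simp: in_set_conv_nth)
      then show ?thesis using that fs by simp
    qed
    have "(i,j) \<in> {..<n}\<times>{..<n}" using i j by simp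
    then have "\<not> (a (sorted_list_of_set s ! i) \<inter> a (sorted_list_of_set t ! j) \<subseteq> {..<k})"
      using good s t(1) by fast
    then show "\<not> (a \<alpha> \<inter> a \<beta> \<subseteq> {..<k})" using i j by simp
  qed
  then show ?thesis using sE t(2) by blast
qed

end
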